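(* A pseudovariety of semigroupoids $\mathsf V$ is equidivisible if and only if $\overline{\Omega}_A\mathsf V$ is equidivisible for every finite-vertex graph $A$.
   Context: A semigroupoid is a graph (vertices, edges, source/range maps $\alpha,\omega$) with associative partial multiplication $st$ defined iff $\alpha(s)=\omega(t)$; $S^I$ is $S$ with a local identity adjoined at each vertex. $S$ is equidivisible if whenever $uv=xy$ for edges $u,v,x,y$, there is $t\in E(S^I)$ with either ($ut=x$ and $v=ty$) or ($xt=u$ and $y=tv$). A pseudovariety of semigroupoids (class of finite semigroupoids closed under divisors, finite direct products, finite coproducts) $\mathsf V$ is equidivisible if the free pro-$\mathsf V$ semigroupoid $\overline{\Omega}_A\mathsf V$ is equidivisible for every finite graph $A$ (finitely many vertices and edges). Finite-vertex graphs may have infinitely many edges. *)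

theory Defs
  imports Main
begin

text \<open>A semigroupoid additionally has a partial multiplication: mult s t is the
  product st, defined iff alpha s = omega t (outside that domain mult is irrelevant).\<close>

record ('v, 'e) graph =
  verts :: "'v set"
  edges :: "'e set"
  alpha :: "'e \<Rightarrow> 'v"
  omega :: "'e \<Rightarrow> 'v"

record ('v, 'e) sgd = "('v, 'e) graph" +
  mult :: "'e \<Rightarrow> 'e \<Rightarrow> 'e"

definition is_graph :: "('v, 'e, 'm) graph_scheme \<Rightarrow> bool" where
  "is_graph A \<longleftrightarrow> (\<forall>e\<in>edges A. alpha A e \<in> verts A \<and> omega A e \<in> verts A)"

definition is_sgd :: "('v, 'e) sgd \<Rightarrow> bool" where
  "is_sgd S \<longleftrightarrow> is_graph S
     \<and> (\<forall>s\<in>edges S. \<forall>t\<in>edges S. alpha S s = omega S t \<longrightarrow>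
          mult S s t \<in> edges S \<and> alpha S (mult S s t) = alpha S t
          \<and> omega S (mult S s t) = omega S s)
     \<and> (\<forall>s\<in>edges S. \<forall>t\<in>edges S. \<forall>u\<in>edges S.
          alpha S s = omega S t \<longrightarrow> alpha S t = omega S u \<longrightarrow>
          mult S (mult S s t) u = mult S s (mult S t u))"

definition finite_sgd :: "('v, 'e) sgd \<Rightarrow> bool" where
  "finite_sgd S \<longleftrightarrow> is_sgd S \<and> finite (verts S) \<and> finite (edges S)"

definition graph_hom :: "('v, 'e, 'm) graph_scheme \<Rightarrow> ('w, 'f, 'n) graph_scheme
     \<Rightarrow> ('v \<Rightarrow> 'w) \<Rightarrow> ('e \<Rightarrow> 'f) \<Rightarrow> bool" where
  "graph_hom A T f g \<longleftrightarrow>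
     (\<forall>v\<in>verts A. f v \<in> verts T)
   \<and> (\<forall>e\<in>edges A. g e \<in> edges T \<and> alpha T (g e) = f (alpha A e)
                   \<and> omega T (g e) = f (omega A e))"

definition sgd_hom :: "('v, 'e) sgd \<Rightarrow> ('w, 'f) sgd
     \<Rightarrow> ('v \<Rightarrow> 'w) \<Rightarrow> ('e \<Rightarrow> 'f) \<Rightarrow> bool" where
  "sgd_hom S T f g \<longleftrightarrow> graph_hom S T f g
     \<and> (\<forall>s\<in>edges S. \<forall>t\<in>edges S. alpha S s = omega S t \<longrightarrow>
          g (mult S s t) = mult T (g s) (g t))"

definition sgd_iso :: "('v, 'e) sgd \<Rightarrow> ('w, 'f) sgd \<Rightarrow> bool" where
  "sgd_iso S T \<longleftrightarrow> (\<exists>f g. sgd_hom S T f g \<and> bij_betw f (verts S) (verts T)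
                          \<and> bij_betw g (edges S) (edges T))"

definition divides :: "('v, 'e) sgd \<Rightarrow> ('w, 'f) sgd \<Rightarrow> bool" where
  "divides S T \<longleftrightarrow> (\<exists>(nu :: 'v \<Rightarrow> 'w) (R :: 'e \<Rightarrow> 'f set).
      (\<forall>v\<in>verts S. nu v \<in> verts T)
    \<and> (\<forall>s\<in>edges S. R s \<noteq> {} \<and> R s \<subseteq> edges T
          \<and> (\<forall>t\<in>R s. alpha T t = nu (alpha S s) \<and> omega T t = nu (omega S s)))
    \<and> (\<forall>s\<in>edges S. \<forall>s'\<in>edges S. alpha S s = omega S s' \<longrightarrow>
          (\<forall>t\<in>R s. \<forall>t'\<in>R s'. mult T t t' \<in> R (mult S s s')))
    \<and> (\<forall>s\<in>edges S. \<forall>s'\<in>edges S. alpha S s = alpha S s' \<and> omega S s = omega S s'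
          \<and> R s \<inter> R s' \<noteq> {} \<longrightarrow> s = s'))"

definition sgd_prod :: "('v, 'e) sgd \<Rightarrow> ('w, 'f) sgd \<Rightarrow> ('v \<times> 'w, 'e \<times> 'f) sgd" where
  "sgd_prod S T = \<lparr> verts = verts S \<times> verts T, edges = edges S \<times> edges T,
     alpha = (\<lambda>(s, t). (alpha S s, alpha T t)),
     omega = (\<lambda>(s, t). (omega S s, omega T t)),
     mult = (\<lambda>(s, t) (s', t'). (mult S s s', mult T t t')) \<rparr>"

definition sgd_coprod :: "('v, 'e) sgd \<Rightarrow> ('w, 'f) sgd \<Rightarrow> ('v + 'w, 'e + 'f) sgd" where
  "sgd_coprod S T = \<lparr> verts = Inl ` verts S \<union> Inr ` verts T,
     edges = Inl ` edges S \<union> Inr ` edges T,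
     alpha = (\<lambda>x. case x of Inl s \<Rightarrow> Inl (alpha S s) | Inr t \<Rightarrow> Inr (alpha T t)),
     omega = (\<lambda>x. case x of Inl s \<Rightarrow> Inl (omega S s) | Inr t \<Rightarrow> Inr (omega T t)),
     mult = (\<lambda>x y. case (x, y) of (Inl s, Inl s') \<Rightarrow> Inl (mult S s s')
                               | (Inr t, Inr t') \<Rightarrow> Inr (mult T t t')
                               | _ \<Rightarrow> undefined) \<rparr>"

text \<open>Empty product (trivial semigroupoid) and empty coproduct (empty semigroupoid).\<close>
definition sgd_trivial :: "(unit, unit) sgd" where
  "sgd_trivial = \<lparr> verts = {()}, edges = {()}, alpha = (\<lambda>_. ()), omega = (\<lambda>_. ()),
                   mult = (\<lambda>_ _. ()) \<rparr>"

definition sgd_empty :: "(unit, unit) sgd" where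
  "sgd_empty = \<lparr> verts = {}, edges = {}, alpha = (\<lambda>_. ()), omega = (\<lambda>_. ()),
                 mult = (\<lambda>_ _. ()) \<rparr>"

text \<open>Every finite semigroupoid is isomorphic to one whose vertices and edges are
  natural numbers, so a pseudovariety is represented by the class of its members
  carried by nat, closed under isomorphic copies (a consequence of division closure).\<close>
definition pseudovariety :: "(nat, nat) sgd set \<Rightarrow> bool" where
  "pseudovariety V \<longleftrightarrow>
     (\<forall>S\<in>V. finite_sgd S)
   \<and> (\<forall>T\<in>V. \<forall>S :: (nat, nat) sgd. finite_sgd S \<and> divides S T \<longrightarrow> S \<in> V)
   \<and> (\<forall>S\<in>V. \<forall>T\<in>V. \<exists>P\<in>V. sgd_iso P (sgd_prod S T))
   \<and> (\<exists>P\<in>V. sgd_iso P sgd_trivial)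
   \<and> (\<forall>S\<in>V. \<forall>T\<in>V. \<exists>P\<in>V. sgd_iso P (sgd_coprod S T))
   \<and> (\<exists>P\<in>V. sgd_iso P sgd_empty)"

text \<open>S^I: S with a local identity adjoined at each vertex (Inr q is the identity at q).\<close>
definition sgdI :: "('v, 'e) sgd \<Rightarrow> ('v, 'e + 'v) sgd" where
  "sgdI S = \<lparr> verts = verts S, edges = Inl ` edges S \<union> Inr ` verts S,
     alpha = (\<lambda>x. case x of Inl e \<Rightarrow> alpha S e | Inr q \<Rightarrow> q),
     omega = (\<lambda>x. case x of Inl e \<Rightarrow> omega S e | Inr q \<Rightarrow> q),
     mult = (\<lambda>x y. case (x, y) of (Inl s, Inl t) \<Rightarrow> Inl (mult S s t)
                               | (Inr _, _) \<Rightarrow> y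
                               | (Inl _, Inr _) \<Rightarrow> x) \<rparr>"

definition equidivisible :: "('v, 'e) sgd \<Rightarrow> bool" where
  "equidivisible S \<longleftrightarrow>
    (\<forall>u\<in>edges S. \<forall>v\<in>edges S. \<forall>x\<in>edges S. \<forall>y\<in>edges S.
       alpha S u = omega S v \<longrightarrow> alpha S x = omega S y \<longrightarrow>
       mult S u v = mult S x y \<longrightarrow>
       (\<exists>t\<in>edges (sgdI S).
          (alpha (sgdI S) (Inl u) = omega (sgdI S) t \<and> mult (sgdI S) (Inl u) t = Inl x
            \<and> alpha (sgdI S) t = omega (sgdI S) (Inl y) \<and> Inl v = mult (sgdI S) t (Inl y))
        \<or> (alpha (sgdI S) (Inl x) = omega (sgdI S) t \<and> mult (sgdI S) (Inl x) t = Inl u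
            \<and> alpha (sgdI S) t = omega (sgdI S) (Inl v) \<and> Inl y = mult (sgdI S) t (Inl v))))"

text \<open>Index objects: pairs (T, phi) with T in V and phi a graph morphism A -> T.
  The free pro-V semigroupoid over A is the projective limit of this (cofiltered)
  system, i.e. the families of vertices/edges compatible with every semigroupoid
  morphism h: T -> T' satisfying h o phi = phi' on A.\<close>

type_synonym ('v, 'e) idx = "(nat, nat) sgd \<times> ('v \<Rightarrow> nat) \<times> ('e \<Rightarrow> nat)"

definition pv_index :: "(nat, nat) sgd set \<Rightarrow> ('v, 'e) graph \<Rightarrow> ('v, 'e) idx set" where
  "pv_index V A = {(T, f, g). T \<in> V \<and> graph_hom A T f g}"

definition compatible :: "('v, 'e) graph \<Rightarrow> ('v, 'e) idx \<Rightarrow> ('v, 'e) idx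
     \<Rightarrow> (nat \<Rightarrow> nat) \<Rightarrow> (nat \<Rightarrow> nat) \<Rightarrow> bool" where
  "compatible A i j h k \<longleftrightarrow> (case i of (T, f, g) \<Rightarrow> case j of (T', f', g') \<Rightarrow>
      sgd_hom T T' h k \<and> (\<forall>v\<in>verts A. h (f v) = f' v) \<and> (\<forall>e\<in>edges A. k (g e) = g' e))"

definition lim_verts :: "(nat, nat) sgd set \<Rightarrow> ('v, 'e) graph \<Rightarrow> (('v, 'e) idx \<Rightarrow> nat) set" where
  "lim_verts V A = {w. (\<forall>i. i \<notin> pv_index V A \<longrightarrow> w i = undefined)
     \<and> (\<forall>i\<in>pv_index V A. w i \<in> verts (fst i))
     \<and> (\<forall>i\<in>pv_index V A. \<forall>j\<in>pv_index V A. \<forall>h k. compatible A i j h k \<longrightarrow> h (w i) = w j)}"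

definition lim_edges :: "(nat, nat) sgd set \<Rightarrow> ('v, 'e) graph \<Rightarrow> (('v, 'e) idx \<Rightarrow> nat) set" where
  "lim_edges V A = {w. (\<forall>i. i \<notin> pv_index V A \<longrightarrow> w i = undefined)
     \<and> (\<forall>i\<in>pv_index V A. w i \<in> edges (fst i))
     \<and> (\<forall>i\<in>pv_index V A. \<forall>j\<in>pv_index V A. \<forall>h k. compatible A i j h k \<longrightarrow> k (w i) = w j)}"

definition free_pro :: "(nat, nat) sgd set \<Rightarrow> ('v, 'e) graph
     \<Rightarrow> (('v, 'e) idx \<Rightarrow> nat, ('v, 'e) idx \<Rightarrow> nat) sgd" where
  "free_pro V A = \<lparr> verts = lim_verts V A, edges = lim_edges V A,
     alpha = (\<lambda>w i. if i \<in> pv_index V A then alpha (fst i) (w i) else undefined),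
     omega = (\<lambda>w i. if i \<in> pv_index V A then omega (fst i) (w i) else undefined),
     mult = (\<lambda>w w' i. if i \<in> pv_index V A then mult (fst i) (w i) (w' i) else undefined) \<rparr>"

text \<open>A pseudovariety is equidivisible if the free pro-V semigroupoid over every finite
  graph is equidivisible (finite graphs are taken, up to isomorphism, on nat).\<close>
definition equidivisible_pv :: "(nat, nat) sgd set \<Rightarrow> bool" where
  "equidivisible_pv V \<longleftrightarrow>
     (\<forall>A :: (nat, nat) graph. is_graph A \<and> finite (verts A) \<and> finite (edges A)
        \<longrightarrow> equidivisible (free_pro V A))"

end

theory Submission
  imports Defs "HOL-Analysis.Analysis"
begin



lemma fin_det_closed:
  fixes E :: "'i \<Rightarrow> 'a set"
  assumes "finite G" "G \<subseteq> I" "S \<subseteq> PiE I E"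
    and det: "\<And>w w'. w \<in> PiE I E \<Longrightarrow> w' \<in> PiE I E \<Longrightarrow> (\<forall>i\<in>G. w i = w' i) \<Longrightarrow> w \<in> S \<Longrightarrow> w' \<in> S"
  shows "closedin (product_topology (\<lambda>i. discrete_topology (E i)) I) S"
proof -
  let ?X = "product_topology (\<lambda>i. discrete_topology (E i)) I"
  have top: "topspace ?X = PiE I E" by simp
  have "openin ?X (topspace ?X - S)"
  proof (subst openin_subopen, intro ballI)
    fix w assume w: "w \<in> topspace ?X - S"
    let ?U = "(\<Inter>i\<in>G. {w' \<in> topspace ?X. w' i \<in> {w i}}) \<inter> topspace ?X"
    have "openin ?X ?U"
    proof (rule openin_INT[OF assms(1)])
      fix i assume "i \<in> G"
      hence "i \<in> I" using assms(2) by auto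
      show "openin ?X {w' \<in> topspace ?X. w' i \<in> {w i}}"
        apply (rule openin_continuous_map_preimage[OF continuous_map_product_projection[OF \<open>i \<in> I\<close>]])
        using w \<open>i \<in> I\<close> by auto
    qed
    moreover have "w \<in> ?U" using w by auto
    moreover have "?U \<subseteq> topspace ?X - S"
    proof
      fix w' assume w': "w' \<in> ?U"
      show "w' \<in> topspace ?X - S"
      proof
        show "w' \<in> topspace ?X" using w' by auto
        show "w' \<notin> S"
        proof
          assume "w' \<in> S"
          from det[OF _ _ _ this, of w] w w' top show False by auto
        qed
      qed
    qed
    ultimately show "\<exists>U. openin ?X U \<and> w \<in> U \<and> U \<subseteq> topspace ?X - S" by blast
  qed
  thus ?thesis unfolding closedin_def using assms(3) by simp
qed

lemma compact_fin:
  fixes E :: "'i \<Rightarrow> 'a set" and S :: "'i set \<Rightarrow> ('i \<Rightarrow> 'a) set"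
  assumes fin: "\<forall>i\<in>I. finite (E i)"
    and sub: "\<And>G. finite G \<Longrightarrow> G \<subseteq> I \<Longrightarrow> S G \<subseteq> PiE I E"
    and det: "\<And>G w w'. finite G \<Longrightarrow> G \<subseteq> I \<Longrightarrow> w \<in> PiE I E \<Longrightarrow> w' \<in> PiE I E
        \<Longrightarrow> (\<forall>i\<in>G. w i = w' i) \<Longrightarrow> w \<in> S G \<Longrightarrow> w' \<in> S G"
    and mono: "\<And>G G'. G \<subseteq> G' \<Longrightarrow> G' \<subseteq> I \<Longrightarrow> finite G' \<Longrightarrow> S G' \<subseteq> S G"
    and ne: "\<And>G. finite G \<Longrightarrow> G \<subseteq> I \<Longrightarrow> S G \<noteq> {}"
  shows "\<exists>w. \<forall>G. finite G \<and> G \<subseteq> I \<longrightarrow> w \<in> S G"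
proof -
  let ?X = "product_topology (\<lambda>i. discrete_topology (E i)) I"
  have cs: "compact_space ?X"
    unfolding compact_space_product_topology using fin
    by (simp add: compact_space_discrete_topology)
  define U where "U = S ` {G. finite G \<and> G \<subseteq> I}"
  have "\<Inter>U \<noteq> {}"
  proof (rule cs[unfolded compact_space_fip, rule_format], intro conjI allI impI ballI)
    fix C assume "C \<in> U"
    then obtain G where G: "finite G" "G \<subseteq> I" "C = S G" unfolding U_def by auto
    show "closedin ?X C" unfolding G(3)
      by (rule fin_det_closed[OF G(1,2) sub[OF G(1,2)]]) (rule det[OF G(1,2)], auto)
  next
    fix F assume F: "finite F \<and> F \<subseteq> U"
    then obtain Gs where Gs: "Gs \<subseteq> {G. finite G \<and> G \<subseteq> I}" "finite Gs" "F = S ` Gs"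
      unfolding U_def by (meson finite_subset_image)
    have fG: "finite (\<Union>Gs)" "\<Union>Gs \<subseteq> I" using Gs by auto
    have "S (\<Union>Gs) \<subseteq> \<Inter>F" using Gs mono[OF _ fG(2) fG(1)] by auto
    thus "\<Inter>F \<noteq> {}" using ne[OF fG] by auto
  qed
  then obtain w where "w \<in> \<Inter>U" by auto
  thus ?thesis unfolding U_def by auto
qed




lemma pv_sgd: "pseudovariety V \<Longrightarrow> T \<in> V \<Longrightarrow> is_sgd T \<and> finite (edges T) \<and> finite (verts T)"
  unfolding pseudovariety_def finite_sgd_def by blast

lemma id_compat:
  "\<forall>a\<in>verts A. f a = f' a \<Longrightarrow> \<forall>e\<in>edges A. g e = g' e \<Longrightarrow> compatible A (T,f,g) (T,f',g') id id"
  unfolding compatible_def sgd_hom_def graph_hom_def by auto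

lemma lim_edges_eq:
  assumes "w \<in> lim_edges V A" "(T,f,g) \<in> pv_index V A" "(T,f',g') \<in> pv_index V A"
    "\<forall>a\<in>verts A. f a = f' a" "\<forall>e\<in>edges A. g e = g' e"
  shows "w (T,f,g) = w (T,f',g')"
proof -
  have "\<forall>i\<in>pv_index V A. \<forall>j\<in>pv_index V A. \<forall>h k. compatible A i j h k \<longrightarrow> k (w i) = w j"
    using assms(1) unfolding lim_edges_def by blast
  from this[rule_format, OF assms(2,3) id_compat[OF assms(4,5)]] show ?thesis by simp
qed

definition pimap :: "(nat,nat) sgd set \<Rightarrow> ('c,'d) graph \<Rightarrow> ('a \<Rightarrow> 'c) \<Rightarrow> ('b \<Rightarrow> 'd)
   \<Rightarrow> (('a,'b) idx \<Rightarrow> nat) \<Rightarrow> (('c,'d) idx \<Rightarrow> nat)" where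
  "pimap V B pv pe w = (\<lambda>i. if i \<in> pv_index V B then w (fst i, fst (snd i) \<circ> pv, snd (snd i) \<circ> pe) else undefined)"

lemma pi_index:
  assumes "graph_hom A B pv pe" "(T,f,g) \<in> pv_index V B"
  shows "(T, f \<circ> pv, g \<circ> pe) \<in> pv_index V A"
  using assms unfolding pv_index_def graph_hom_def by auto

lemma pi_compat:
  assumes "graph_hom A B pv pe" "compatible B (T,f,g) (T',f',g') h k"
  shows "compatible A (T, f \<circ> pv, g \<circ> pe) (T', f' \<circ> pv, g' \<circ> pe) h k"
  using assms unfolding compatible_def graph_hom_def by auto

lemma pi_lim_edges:
  assumes "graph_hom A B pv pe" "w \<in> lim_edges V A"
  shows "pimap V B pv pe w \<in> lim_edges V B"
proof -
  { fix i j h k assume i: "i \<in> pv_index V B" and j: "j \<in> pv_index V B" and c: "compatible B i j h k"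
    obtain T f g where ii: "i = (T,f,g)" by (cases i) auto
    obtain T' f' g' where jj: "j = (T',f',g')" by (cases j) auto
    have "k (w (T, f \<circ> pv, g \<circ> pe)) = w (T', f' \<circ> pv, g' \<circ> pe)"
      using assms(2) pi_index[OF assms(1)] pi_compat[OF assms(1)] i j c unfolding ii jj lim_edges_def
      by blast
    hence "k (pimap V B pv pe w i) = pimap V B pv pe w j" using i j unfolding pimap_def ii jj by simp }
  moreover
  { fix i assume i: "i \<in> pv_index V B"
    obtain T f g where ii: "i = (T,f,g)" by (cases i) auto
    have "(T, f \<circ> pv, g \<circ> pe) \<in> pv_index V A" using pi_index[OF assms(1)] i ii by blast
    hence "w (T, f \<circ> pv, g \<circ> pe) \<in> edges T" using assms(2) unfolding lim_edges_def by force
    hence "pimap V B pv pe w i \<in> edges (fst i)"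
      using i unfolding pimap_def ii by auto }
  ultimately show ?thesis unfolding lim_edges_def pimap_def by auto
qed

lemma pi_alpha: "alpha (free_pro V B) (pimap V B pv pe w) = pimap V B pv pe (alpha (free_pro V A) w)" (is "?l = ?r")
  if "graph_hom A B pv pe"
proof (rule ext)
  fix i :: "('c,'d) idx"
  obtain T f g where ii: "i = (T,f,g)" by (cases i) auto
  show "?l i = ?r i"
    using pi_index[OF that, of T f g V] unfolding pimap_def free_pro_def ii by auto
qed

lemma pi_omega: "omega (free_pro V B) (pimap V B pv pe w) = pimap V B pv pe (omega (free_pro V A) w)" (is "?l = ?r")
  if "graph_hom A B pv pe"
proof (rule ext)
  fix i :: "('c,'d) idx"
  obtain T f g where ii: "i = (T,f,g)" by (cases i) auto
  show "?l i = ?r i"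
    using pi_index[OF that, of T f g V] unfolding pimap_def free_pro_def ii by auto
qed

lemma pi_mult: "sgd.mult (free_pro V B) (pimap V B pv pe w) (pimap V B pv pe w') = pimap V B pv pe (sgd.mult (free_pro V A) w w')" (is "?l = ?r")
  if "graph_hom A B pv pe"
proof (rule ext)
  fix i :: "('c,'d) idx"
  obtain T f g where ii: "i = (T,f,g)" by (cases i) auto
  show "?l i = ?r i"
    using pi_index[OF that, of T f g V] unfolding pimap_def free_pro_def ii by auto
qed

lemma pi_eval:
  assumes "graph_hom A B pv pe" "w \<in> lim_edges V A" "(T,f,g) \<in> pv_index V A" "(T,f',g') \<in> pv_index V B"
    "\<forall>a\<in>verts A. f' (pv a) = f a" "\<forall>e\<in>edges A. g' (pe e) = g e"
  shows "pimap V B pv pe w (T,f',g') = w (T,f,g)"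
  using lim_edges_eq[OF assms(2) pi_index[OF assms(1,4)] assms(3)] assms(4-6)
  unfolding pimap_def by auto



lemma equidiv_D:
  assumes "equidivisible S" "u \<in> edges S" "v \<in> edges S" "x \<in> edges S" "y \<in> edges S"
    "alpha S u = omega S v" "alpha S x = omega S y" "sgd.mult S u v = sgd.mult S x y"
  shows "(u = x \<and> v = y) \<or> (\<exists>t\<in>edges S. (alpha S u = omega S t \<and> sgd.mult S u t = x \<and> alpha S t = omega S y \<and> v = sgd.mult S t y)
      \<or> (alpha S x = omega S t \<and> sgd.mult S x t = u \<and> alpha S t = omega S v \<and> y = sgd.mult S t v))"
proof -
  from assms obtain t where t: "t \<in> edges (sgdI S)" and
    c: "(alpha (sgdI S) (Inl u) = omega (sgdI S) t \<and> sgd.mult (sgdI S) (Inl u) t = Inl x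
            \<and> alpha (sgdI S) t = omega (sgdI S) (Inl y) \<and> Inl v = sgd.mult (sgdI S) t (Inl y))
        \<or> (alpha (sgdI S) (Inl x) = omega (sgdI S) t \<and> sgd.mult (sgdI S) (Inl x) t = Inl u
            \<and> alpha (sgdI S) t = omega (sgdI S) (Inl v) \<and> Inl y = sgd.mult (sgdI S) t (Inl v))"
    unfolding equidivisible_def by meson
  show ?thesis
  proof (cases t)
    case (Inl t')
    then have "t' \<in> edges S" using t by (auto simp: sgdI_def)
    then show ?thesis using c Inl by (auto simp: sgdI_def)
  next
    case (Inr q)
    then show ?thesis using c by (auto simp: sgdI_def)
  qed
qed

lemma equidiv_I:
  assumes "\<And>u v x y. u \<in> edges S \<Longrightarrow> v \<in> edges S \<Longrightarrow> x \<in> edges S \<Longrightarrow> y \<in> edges S \<Longrightarrow>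
    alpha S u = omega S v \<Longrightarrow> alpha S x = omega S y \<Longrightarrow> sgd.mult S u v = sgd.mult S x y \<Longrightarrow>
    (u = x \<and> v = y \<and> alpha S u \<in> verts S) \<or> (\<exists>t\<in>edges S. (alpha S u = omega S t \<and> sgd.mult S u t = x \<and> alpha S t = omega S y \<and> v = sgd.mult S t y)
      \<or> (alpha S x = omega S t \<and> sgd.mult S x t = u \<and> alpha S t = omega S v \<and> y = sgd.mult S t v))"
  shows "equidivisible S"
  unfolding equidivisible_def
proof (intro ballI impI)
  fix u v x y assume e: "u \<in> edges S" "v \<in> edges S" "x \<in> edges S" "y \<in> edges S"
    and q: "alpha S u = omega S v" "alpha S x = omega S y" "sgd.mult S u v = sgd.mult S x y"
  from assms[OF e q] show "\<exists>t\<in>edges (sgdI S).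
          (alpha (sgdI S) (Inl u) = omega (sgdI S) t \<and> sgd.mult (sgdI S) (Inl u) t = Inl x
            \<and> alpha (sgdI S) t = omega (sgdI S) (Inl y) \<and> Inl v = sgd.mult (sgdI S) t (Inl y))
        \<or> (alpha (sgdI S) (Inl x) = omega (sgdI S) t \<and> sgd.mult (sgdI S) (Inl x) t = Inl u
            \<and> alpha (sgdI S) t = omega (sgdI S) (Inl v) \<and> Inl y = sgd.mult (sgdI S) t (Inl v))"
  proof
    assume h: "u = x \<and> v = y \<and> alpha S u \<in> verts S"
    show ?thesis
      by (rule bexI[of _ "Inr (alpha S u)"]) (use h q in \<open>auto simp: sgdI_def\<close>)
  next
    assume "\<exists>t\<in>edges S. (alpha S u = omega S t \<and> sgd.mult S u t = x \<and> alpha S t = omega S y \<and> v = sgd.mult S t y)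
      \<or> (alpha S x = omega S t \<and> sgd.mult S x t = u \<and> alpha S t = omega S v \<and> y = sgd.mult S t v)"
    then obtain t where "t \<in> edges S" "(alpha S u = omega S t \<and> sgd.mult S u t = x \<and> alpha S t = omega S y \<and> v = sgd.mult S t y)
      \<or> (alpha S x = omega S t \<and> sgd.mult S x t = u \<and> alpha S t = omega S v \<and> y = sgd.mult S t v)" by blast
    then show ?thesis
      by (intro bexI[of _ "Inl t"]) (auto simp: sgdI_def)
  qed
qed



lemma lim_alpha:
  assumes PV: "pseudovariety V" and u: "u \<in> lim_edges V A"
  shows "alpha (free_pro V A) u \<in> lim_verts V A"
proof -
  have a: "alpha (free_pro V A) u = (\<lambda>i. if i \<in> pv_index V A then alpha (fst i) (u i) else undefined)"
    by (simp add: free_pro_def)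
  { fix i assume i: "i \<in> pv_index V A"
    then have "fst i \<in> V" by (auto simp: pv_index_def)
    then have "is_sgd (fst i)" using pv_sgd[OF PV] by blast
    moreover have "u i \<in> edges (fst i)" using u i unfolding lim_edges_def by blast
    ultimately have "alpha (fst i) (u i) \<in> verts (fst i)" unfolding is_sgd_def is_graph_def by blast }
  moreover
  { fix i j h k assume i: "i \<in> pv_index V A" and j: "j \<in> pv_index V A" and c: "compatible A i j h k"
    obtain T f g where ii: "i = (T,f,g)" by (cases i) auto
    obtain T' f' g' where jj: "j = (T',f',g')" by (cases j) auto
    have hom: "sgd_hom T T' h k" using c unfolding ii jj compatible_def by simp
    have ue: "u i \<in> edges T" using u i unfolding lim_edges_def ii by auto
    have "k (u i) = u j" using u i j c unfolding lim_edges_def by blast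
    moreover have "alpha T' (k (u i)) = h (alpha T (u i))" using hom ue unfolding sgd_hom_def graph_hom_def by blast
    ultimately have "h (alpha (fst i) (u i)) = alpha (fst j) (u j)" unfolding ii jj by simp }
  ultimately show ?thesis unfolding a lim_verts_def by auto
qed

definition solP :: "(nat,nat) sgd \<Rightarrow> nat \<Rightarrow> nat \<Rightarrow> nat \<Rightarrow> nat \<Rightarrow> nat \<Rightarrow> bool" where
  "solP T u v x y w \<longleftrightarrow> alpha T u = omega T w \<and> sgd.mult T u w = x \<and> alpha T w = omega T y \<and> v = sgd.mult T w y"

lemma factor_compat:
  assumes "compatible A (T,f,g) (T',f2,g2) h k"
    "\<forall>a\<in>verts A. fs (p1 a) = f a" "\<forall>e\<in>edges A. gs (p2 e) = g e"
    "\<forall>a\<in>verts A. fs' (p1 a) = f2 a" "\<forall>e\<in>edges A. gs' (p2 e) = g2 e"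
    "p1 ` verts A = verts B" "p2 ` edges A = edges B"
  shows "compatible B (T,fs,gs) (T',fs',gs') h k"
proof -
  have c: "sgd_hom T T' h k" "\<forall>v\<in>verts A. h (f v) = f2 v" "\<forall>e\<in>edges A. k (g e) = g2 e"
    using assms(1) unfolding compatible_def by simp_all
  have "h (fs b) = fs' b" if "b \<in> verts B" for b
  proof -
    have "b \<in> p1 ` verts A" using that assms(6) by simp
    then obtain a where a: "a \<in> verts A" "b = p1 a" by blast
    have "h (fs b) = h (f a)" using a assms(2) by simp
    also have "\<dots> = f2 a" using a c(2) by simp
    also have "\<dots> = fs' b" using a assms(4) by simp
    finally show ?thesis .
  qed
  moreover have "k (gs b) = gs' b" if "b \<in> edges B" for b
  proof -
    have "b \<in> p2 ` edges A" using that assms(7) by simp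
    then obtain a where a: "a \<in> edges A" "b = p2 a" by blast
    have "k (gs b) = k (g a)" using a assms(3) by simp
    also have "\<dots> = g2 a" using a c(3) by simp
    also have "\<dots> = gs' b" using a assms(5) by simp
    finally show ?thesis .
  qed
  ultimately show ?thesis using c(1) unfolding compatible_def by simp
qed

lemma transfer_sol:
  fixes A :: "('a,'b) graph" and B :: "('c,'d) graph"
  assumes hom: "graph_hom A B p1 p2" and s1: "p1 ` verts A = verts B" and s2: "p2 ` edges A = edges B"
    and fac: "\<forall>i\<in>G. (fst i, fs i, gs i) \<in> pv_index V B \<and> (\<forall>a\<in>verts A. fs i (p1 a) = fst (snd i) a)
            \<and> (\<forall>e\<in>edges A. gs i (p2 e) = snd (snd i) e)"
    and G: "G \<subseteq> pv_index V A"
    and e: "u \<in> lim_edges V A" "v \<in> lim_edges V A" "x \<in> lim_edges V A" "y \<in> lim_edges V A"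
    and t: "t \<in> lim_edges V B"
    and q1: "alpha (free_pro V B) (pimap V B p1 p2 u) = omega (free_pro V B) t"
    and q2: "sgd.mult (free_pro V B) (pimap V B p1 p2 u) t = pimap V B p1 p2 x"
    and q3: "alpha (free_pro V B) t = omega (free_pro V B) (pimap V B p1 p2 y)"
    and q4: "pimap V B p1 p2 v = sgd.mult (free_pro V B) t (pimap V B p1 p2 y)"
  shows "\<forall>i\<in>G. t (fst i, fs i, gs i) \<in> edges (fst i) \<and> solP (fst i) (u i) (v i) (x i) (y i) (t (fst i, fs i, gs i))"
    and "\<forall>i\<in>G. \<forall>j\<in>G. \<forall>h k. compatible A i j h k \<longrightarrow> k (t (fst i, fs i, gs i)) = t (fst j, fs j, gs j)"
proof -
  show "\<forall>i\<in>G. t (fst i, fs i, gs i) \<in> edges (fst i) \<and> solP (fst i) (u i) (v i) (x i) (y i) (t (fst i, fs i, gs i))"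
  proof
    fix i assume iG: "i \<in> G"
    obtain T f g where ii: "i = (T,f,g)" by (cases i) auto
    let ?i' = "(T, fs i, gs i)"
    have iA: "(T,f,g) \<in> pv_index V A" using G iG ii by auto
    have iB: "?i' \<in> pv_index V B" and f1: "\<forall>a\<in>verts A. fs i (p1 a) = f a" and f2: "\<forall>e\<in>edges A. gs i (p2 e) = g e"
      using fac iG ii by auto
    have ev: "pimap V B p1 p2 z ?i' = z (T,f,g)" if "z \<in> lim_edges V A" for z
      by (rule pi_eval[OF hom that iA iB f1 f2])
    have "t ?i' \<in> edges T" using t iB unfolding lim_edges_def by force
    moreover have "alpha T (u (T,f,g)) = omega T (t ?i')"
      using fun_cong[OF q1, of ?i'] iB ev[OF e(1)] by (simp add: free_pro_def)
    moreover have "sgd.mult T (u (T,f,g)) (t ?i') = x (T,f,g)"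
      using fun_cong[OF q2, of ?i'] iB ev[OF e(1)] ev[OF e(3)] by (simp add: free_pro_def)
    moreover have "alpha T (t ?i') = omega T (y (T,f,g))"
      using fun_cong[OF q3, of ?i'] iB ev[OF e(4)] by (simp add: free_pro_def)
    moreover have "v (T,f,g) = sgd.mult T (t ?i') (y (T,f,g))"
      using fun_cong[OF q4, of ?i'] iB ev[OF e(2)] ev[OF e(4)] by (simp add: free_pro_def)
    ultimately show "t (fst i, fs i, gs i) \<in> edges (fst i) \<and> solP (fst i) (u i) (v i) (x i) (y i) (t (fst i, fs i, gs i))"
      unfolding ii solP_def by simp
  qed
  show "\<forall>i\<in>G. \<forall>j\<in>G. \<forall>h k. compatible A i j h k \<longrightarrow> k (t (fst i, fs i, gs i)) = t (fst j, fs j, gs j)"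
  proof (intro ballI allI impI)
    fix i j h k assume iG: "i \<in> G" and jG: "j \<in> G" and c: "compatible A i j h k"
    obtain T f g where ii: "i = (T,f,g)" by (cases i) auto
    obtain T' f' g' where jj: "j = (T',f',g')" by (cases j) auto
    have fi: "(T, fs i, gs i) \<in> pv_index V B" "\<forall>a\<in>verts A. fs i (p1 a) = f a" "\<forall>e\<in>edges A. gs i (p2 e) = g e"
      using fac iG ii by auto
    have fj: "(T', fs j, gs j) \<in> pv_index V B" "\<forall>a\<in>verts A. fs j (p1 a) = f' a" "\<forall>e\<in>edges A. gs j (p2 e) = g' e"
      using fac jG jj by auto
    have c': "compatible B (T, fs i, gs i) (T', fs j, gs j) h k"
      by (rule factor_compat[OF c[unfolded ii jj] fi(2,3) fj(2,3) s1 s2])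
    note fi(1) fj(1)
    then show "k (t (fst i, fs i, gs i)) = t (fst j, fs j, gs j)"
      using t c' unfolding lim_edges_def ii jj by auto
  qed
qed




lemma sol_lift:
  assumes w: "w \<in> PiE (pv_index V A) (\<lambda>i. edges (fst i))"
    and sol: "\<forall>i\<in>pv_index V A. solP (fst i) (u i) (v i) (x i) (y i) (w i)"
    and cc: "\<forall>i\<in>pv_index V A. \<forall>j\<in>pv_index V A. \<forall>h k. compatible A i j h k \<longrightarrow> k (w i) = w j"
    and e: "u \<in> lim_edges V A" "v \<in> lim_edges V A" "x \<in> lim_edges V A" "y \<in> lim_edges V A"
  shows "w \<in> edges (free_pro V A) \<and> alpha (free_pro V A) u = omega (free_pro V A) w
    \<and> sgd.mult (free_pro V A) u w = x \<and> alpha (free_pro V A) w = omega (free_pro V A) y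
    \<and> v = sgd.mult (free_pro V A) w y"
proof (intro conjI)
  have "\<forall>i. i \<notin> pv_index V A \<longrightarrow> w i = undefined" using w by (auto simp: PiE_def extensional_def)
  moreover have "\<forall>i\<in>pv_index V A. w i \<in> edges (fst i)" using w by (auto simp: PiE_def)
  ultimately show "w \<in> edges (free_pro V A)" using cc by (simp add: free_pro_def lim_edges_def)
  have ux: "\<forall>i. i \<notin> pv_index V A \<longrightarrow> x i = undefined" "\<forall>i. i \<notin> pv_index V A \<longrightarrow> v i = undefined"
    using e unfolding lim_edges_def by auto
  show "alpha (free_pro V A) u = omega (free_pro V A) w"
    using sol unfolding solP_def by (auto simp: free_pro_def fun_eq_iff)
  show "sgd.mult (free_pro V A) u w = x"
    using sol ux unfolding solP_def by (auto simp: free_pro_def fun_eq_iff)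
  show "alpha (free_pro V A) w = omega (free_pro V A) y"
    using sol unfolding solP_def by (auto simp: free_pro_def fun_eq_iff)
  show "v = sgd.mult (free_pro V A) w y"
    using sol ux unfolding solP_def by (auto simp: free_pro_def fun_eq_iff)
qed

lemma core:
  fixes V :: "(nat,nat) sgd set" and A :: "('a,'b) graph"
  assumes PV: "pseudovariety V"
  and hyp: "\<And>G. finite G \<Longrightarrow> G \<subseteq> pv_index V A \<Longrightarrow> \<exists>(B :: ('c,'d) graph) p1 p2.
     equidivisible (free_pro V B) \<and> graph_hom A B p1 p2 \<and> p1 ` verts A = verts B \<and> p2 ` edges A = edges B
     \<and> (\<forall>i\<in>G. \<exists>f' g'. (fst i, f', g') \<in> pv_index V B \<and> (\<forall>a\<in>verts A. f' (p1 a) = fst (snd i) a)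
           \<and> (\<forall>e\<in>edges A. g' (p2 e) = snd (snd i) e))"
  shows "equidivisible (free_pro V A)"
proof (rule equidiv_I)
  fix u v x y
  assume e0: "u \<in> edges (free_pro V A)" "v \<in> edges (free_pro V A)" "x \<in> edges (free_pro V A)" "y \<in> edges (free_pro V A)"
    and q: "alpha (free_pro V A) u = omega (free_pro V A) v" "alpha (free_pro V A) x = omega (free_pro V A) y"
      "sgd.mult (free_pro V A) u v = sgd.mult (free_pro V A) x y"
  have e: "u \<in> lim_edges V A" "v \<in> lim_edges V A" "x \<in> lim_edges V A" "y \<in> lim_edges V A"
    using e0 by (simp_all add: free_pro_def)
  define I where "I = pv_index V A"
  define E where "E = (\<lambda>i::('a,'b) idx. edges (fst i))"
  define CC where "CC G w \<longleftrightarrow> (\<forall>i\<in>G. \<forall>j\<in>G. \<forall>h k. compatible A i j h k \<longrightarrow> k (w i) = (w j :: nat))" for G w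
  define A1 where "A1 G w \<longleftrightarrow> (\<forall>i\<in>G. solP (fst i) (u i) (v i) (x i) (y i) (w i)) \<and> CC G w" for G w
  define A2 where "A2 G w \<longleftrightarrow> (\<forall>i\<in>G. solP (fst i) (x i) (y i) (u i) (v i) (w i)) \<and> CC G w" for G w
  define A3 where "A3 G \<longleftrightarrow> (\<forall>i\<in>G. u i = x i \<and> v i = y i)" for G
  define S where "S G = {w \<in> PiE I E. A1 G w \<or> A2 G w \<or> A3 G}" for G
  have "\<exists>w. \<forall>G. finite G \<and> G \<subseteq> I \<longrightarrow> w \<in> S G"
  proof (rule compact_fin)
    show "\<forall>i\<in>I. finite (E i)" unfolding I_def E_def pv_index_def using pv_sgd[OF PV] by auto
    show "S G \<subseteq> PiE I E" for G unfolding S_def by auto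
    show "w' \<in> S G" if "finite G" "G \<subseteq> I" "w \<in> PiE I E" "w' \<in> PiE I E" "\<forall>i\<in>G. w i = w' i" "w \<in> S G" for G w w'
    proof -
      have "CC G w = CC G w'" unfolding CC_def using that(5) by auto
      moreover have eqs: "(\<forall>i\<in>G. P i (w i)) = (\<forall>i\<in>G. P i (w' i))" for P :: "('a,'b) idx \<Rightarrow> nat \<Rightarrow> bool"
        using that(5) by auto
      ultimately have "A1 G w = A1 G w'" "A2 G w = A2 G w'" unfolding A1_def A2_def
        by (simp_all only: eqs[of "\<lambda>i z. solP (fst i) (u i) (v i) (x i) (y i) z"] eqs[of "\<lambda>i z. solP (fst i) (x i) (y i) (u i) (v i) z"])
      then show ?thesis using that(4,6) unfolding S_def by auto
    qed
    show "S G' \<subseteq> S G" if sub: "G \<subseteq> G'" for G G'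
    proof -
      have cc: "CC G w" if "CC G' w" for w using that sub unfolding CC_def by (meson subsetD)
      have a1: "A1 G w" if "A1 G' w" for w using that sub cc unfolding A1_def by (meson subsetD)
      have a2: "A2 G w" if "A2 G' w" for w using that sub cc unfolding A2_def by (meson subsetD)
      have a3: "A3 G" if "A3 G'" using that sub unfolding A3_def by (meson subsetD)
      show ?thesis unfolding S_def using a1 a2 a3 by blast
    qed
    show "S G \<noteq> {}" if G: "finite G" "G \<subseteq> I" for G
    proof -
      obtain B :: "('c,'d) graph" and p1 p2 where B: "equidivisible (free_pro V B)" and hom: "graph_hom A B p1 p2"
        and s1: "p1 ` verts A = verts B" and s2: "p2 ` edges A = edges B"
        and fac0: "\<forall>i\<in>G. \<exists>f' g'. (fst i, f', g') \<in> pv_index V B \<and> (\<forall>a\<in>verts A. f' (p1 a) = fst (snd i) a)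
           \<and> (\<forall>e\<in>edges A. g' (p2 e) = snd (snd i) e)"
        using hyp[OF G(1) G(2)[unfolded I_def]] by (elim exE conjE) (rule that)
      have "\<forall>i\<in>G. \<exists>p. (fst i, fst p, snd p) \<in> pv_index V B \<and> (\<forall>a\<in>verts A. fst p (p1 a) = fst (snd i) a)
           \<and> (\<forall>e\<in>edges A. snd p (p2 e) = snd (snd i) e)"
      proof
        fix i assume "i \<in> G"
        then obtain f' g' where "(fst i, f', g') \<in> pv_index V B \<and> (\<forall>a\<in>verts A. f' (p1 a) = fst (snd i) a)
           \<and> (\<forall>e\<in>edges A. g' (p2 e) = snd (snd i) e)" using fac0 by blast
        then show "\<exists>p. (fst i, fst p, snd p) \<in> pv_index V B \<and> (\<forall>a\<in>verts A. fst p (p1 a) = fst (snd i) a)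
           \<and> (\<forall>e\<in>edges A. snd p (p2 e) = snd (snd i) e)" by (intro exI[of _ "(f',g')"]) simp
      qed
      then have "\<exists>P. \<forall>i\<in>G. (fst i, fst (P i), snd (P i)) \<in> pv_index V B \<and> (\<forall>a\<in>verts A. fst (P i) (p1 a) = fst (snd i) a)
           \<and> (\<forall>e\<in>edges A. snd (P i) (p2 e) = snd (snd i) e)" by (rule bchoice)
      then obtain P where P: "\<forall>i\<in>G. (fst i, fst (P i), snd (P i)) \<in> pv_index V B \<and> (\<forall>a\<in>verts A. fst (P i) (p1 a) = fst (snd i) a)
           \<and> (\<forall>e\<in>edges A. snd (P i) (p2 e) = snd (snd i) e)" by blast
      define fs where "fs i = fst (P i)" for i
      define gs where "gs i = snd (P i)" for i
      have fac: "\<forall>i\<in>G. (fst i, fs i, gs i) \<in> pv_index V B \<and> (\<forall>a\<in>verts A. fs i (p1 a) = fst (snd i) a)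
           \<and> (\<forall>e\<in>edges A. gs i (p2 e) = snd (snd i) e)" using P unfolding fs_def gs_def by blast
      let ?p = "pimap V B p1 p2"
      have pe: "?p z \<in> edges (free_pro V B)" if "z \<in> lim_edges V A" for z
        using pi_lim_edges[OF hom that] by (simp add: free_pro_def)
      have pq1: "alpha (free_pro V B) (?p u) = omega (free_pro V B) (?p v)"
        by (simp only: pi_alpha[OF hom] pi_omega[OF hom] q(1))
      have pq2: "alpha (free_pro V B) (?p x) = omega (free_pro V B) (?p y)"
        by (simp only: pi_alpha[OF hom] pi_omega[OF hom] q(2))
      have pq3: "sgd.mult (free_pro V B) (?p u) (?p v) = sgd.mult (free_pro V B) (?p x) (?p y)"
        by (simp only: pi_mult[OF hom] q(3))
      have ev: "?p z (fst i, fs i, gs i) = z i" if "z \<in> lim_edges V A" "i \<in> G" for z i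
      proof -
        obtain T f g where ii: "i = (T,f,g)" by (cases i) auto
        have iG': "(T,f,g) \<in> G" using that(2) ii by simp
        have A1: "(T,f,g) \<in> pv_index V A" using G(2) iG' unfolding I_def by blast
        have F: "(T, fs (T,f,g), gs (T,f,g)) \<in> pv_index V B" "\<forall>a\<in>verts A. fs (T,f,g) (p1 a) = f a"
          "\<forall>e\<in>edges A. gs (T,f,g) (p2 e) = g e"
          using fac iG' by auto
        show ?thesis unfolding ii using pi_eval[OF hom that(1) A1 F(1) F(2) F(3)] by simp
      qed
      have uE: "u \<in> PiE I E"
        using e(1) unfolding lim_edges_def I_def E_def PiE_def extensional_def by auto
      have wG: "\<And>t i. i \<in> G \<Longrightarrow> (\<lambda>i. if i \<in> I then (if i \<in> G then t (fst i, fs i, gs i) else u i) else undefined) i = t (fst i, fs i, gs i)"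
        using G(2) by auto
      have wE: "(\<lambda>i. if i \<in> I then (if i \<in> G then t (fst i, fs i, gs i) else u i) else undefined) \<in> PiE I E"
        if "\<forall>i\<in>G. t (fst i, fs i, gs i) \<in> edges (fst i)" for t
      proof (rule PiE_I)
        fix i assume i: "i \<in> I"
        show "(if i \<in> I then (if i \<in> G then t (fst i, fs i, gs i) else u i) else undefined) \<in> E i"
        proof (cases "i \<in> G")
          case True then show ?thesis using that i unfolding E_def by simp
        next
          case False then show ?thesis using uE i PiE_mem by fastforce
        qed
      qed simp
      have CCw: "CC G (\<lambda>i. if i \<in> I then (if i \<in> G then t (fst i, fs i, gs i) else u i) else undefined)"
        if "\<forall>i\<in>G. \<forall>j\<in>G. \<forall>h k. compatible A i j h k \<longrightarrow> k (t (fst i, fs i, gs i)) = t (fst j, fs j, gs j)" for t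
        using that G(2) unfolding CC_def by auto
      have "(?p u = ?p x \<and> ?p v = ?p y) \<or> (\<exists>t\<in>edges (free_pro V B).
          (alpha (free_pro V B) (?p u) = omega (free_pro V B) t \<and> sgd.mult (free_pro V B) (?p u) t = ?p x \<and>
            alpha (free_pro V B) t = omega (free_pro V B) (?p y) \<and> ?p v = sgd.mult (free_pro V B) t (?p y))
       \<or> (alpha (free_pro V B) (?p x) = omega (free_pro V B) t \<and> sgd.mult (free_pro V B) (?p x) t = ?p u \<and>
            alpha (free_pro V B) t = omega (free_pro V B) (?p v) \<and> ?p y = sgd.mult (free_pro V B) t (?p v)))"
        by (rule equidiv_D[OF B pe[OF e(1)] pe[OF e(2)] pe[OF e(3)] pe[OF e(4)] pq1 pq2 pq3])
      then show ?thesis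
      proof
        assume h: "?p u = ?p x \<and> ?p v = ?p y"
        have "A3 G" unfolding A3_def
        proof
          fix i assume "i \<in> G"
          then show "u i = x i \<and> v i = y i" using ev[OF e(1)] ev[OF e(2)] ev[OF e(3)] ev[OF e(4)] h by metis
        qed
        then have "u \<in> S G" using uE unfolding S_def by auto
        then show ?thesis by auto
      next
        assume "\<exists>t\<in>edges (free_pro V B).
          (alpha (free_pro V B) (?p u) = omega (free_pro V B) t \<and> sgd.mult (free_pro V B) (?p u) t = ?p x \<and>
            alpha (free_pro V B) t = omega (free_pro V B) (?p y) \<and> ?p v = sgd.mult (free_pro V B) t (?p y))
       \<or> (alpha (free_pro V B) (?p x) = omega (free_pro V B) t \<and> sgd.mult (free_pro V B) (?p x) t = ?p u \<and>
            alpha (free_pro V B) t = omega (free_pro V B) (?p v) \<and> ?p y = sgd.mult (free_pro V B) t (?p v))"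
        then obtain t where t0: "t \<in> edges (free_pro V B)" and alt:
          "(alpha (free_pro V B) (?p u) = omega (free_pro V B) t \<and> sgd.mult (free_pro V B) (?p u) t = ?p x \<and>
            alpha (free_pro V B) t = omega (free_pro V B) (?p y) \<and> ?p v = sgd.mult (free_pro V B) t (?p y))
       \<or> (alpha (free_pro V B) (?p x) = omega (free_pro V B) t \<and> sgd.mult (free_pro V B) (?p x) t = ?p u \<and>
            alpha (free_pro V B) t = omega (free_pro V B) (?p v) \<and> ?p y = sgd.mult (free_pro V B) t (?p v))"
          by blast
        have t: "t \<in> lim_edges V B" using t0 by (simp add: free_pro_def)
        let ?w = "\<lambda>i. if i \<in> I then (if i \<in> G then t (fst i, fs i, gs i) else u i) else undefined"
        from alt show ?thesis
        proof
          assume a: "alpha (free_pro V B) (?p u) = omega (free_pro V B) t \<and> sgd.mult (free_pro V B) (?p u) t = ?p x \<and>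
            alpha (free_pro V B) t = omega (free_pro V B) (?p y) \<and> ?p v = sgd.mult (free_pro V B) t (?p y)"
          note T = transfer_sol[OF hom s1 s2 fac G(2)[unfolded I_def] e(1) e(2) e(3) e(4) t
              a[THEN conjunct1] a[THEN conjunct2, THEN conjunct1] a[THEN conjunct2, THEN conjunct2, THEN conjunct1]
              a[THEN conjunct2, THEN conjunct2, THEN conjunct2]]
          have "A1 G ?w" unfolding A1_def using T(1) CCw[OF T(2)] wG by simp
          then have "?w \<in> S G" using wE T(1) unfolding S_def by auto
          then show ?thesis by auto
        next
          assume a: "alpha (free_pro V B) (?p x) = omega (free_pro V B) t \<and> sgd.mult (free_pro V B) (?p x) t = ?p u \<and>
            alpha (free_pro V B) t = omega (free_pro V B) (?p v) \<and> ?p y = sgd.mult (free_pro V B) t (?p v)"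
          note T = transfer_sol[OF hom s1 s2 fac G(2)[unfolded I_def] e(3) e(4) e(1) e(2) t
              a[THEN conjunct1] a[THEN conjunct2, THEN conjunct1] a[THEN conjunct2, THEN conjunct2, THEN conjunct1]
              a[THEN conjunct2, THEN conjunct2, THEN conjunct2]]
          have "A2 G ?w" unfolding A2_def using T(1) CCw[OF T(2)] wG by simp
          then have "?w \<in> S G" using wE T(1) unfolding S_def by auto
          then show ?thesis by auto
        qed
      qed
    qed
  qed
  then obtain w where w: "\<And>G. finite G \<Longrightarrow> G \<subseteq> I \<Longrightarrow> w \<in> S G" by blast
  have wE: "w \<in> PiE I E" using w[of "{}"] unfolding S_def by auto
  have m1: "A1 G w" if "A1 G' w" "G \<subseteq> G'" for G G' using that unfolding A1_def CC_def by (meson subsetD)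
  have m2: "A2 G w" if "A2 G' w" "G \<subseteq> G'" for G G' using that unfolding A2_def CC_def by (meson subsetD)
  have m3: "A3 G" if "A3 G'" "G \<subseteq> G'" for G G' using that unfolding A3_def by (meson subsetD)
  have all: "(\<forall>G. finite G \<and> G \<subseteq> I \<longrightarrow> A1 G w) \<or> (\<forall>G. finite G \<and> G \<subseteq> I \<longrightarrow> A2 G w)
      \<or> (\<forall>G. finite G \<and> G \<subseteq> I \<longrightarrow> A3 G)"
  proof (rule ccontr)
    assume "\<not> ?thesis"
    then obtain G1 G2 G3 where G1: "finite G1" "G1 \<subseteq> I" "\<not> A1 G1 w"
      and G2: "finite G2" "G2 \<subseteq> I" "\<not> A2 G2 w" and G3: "finite G3" "G3 \<subseteq> I" "\<not> A3 G3" by blast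
    have "w \<in> S (G1 \<union> G2 \<union> G3)" using w G1 G2 G3 by simp
    then have "A1 (G1 \<union> G2 \<union> G3) w \<or> A2 (G1 \<union> G2 \<union> G3) w \<or> A3 (G1 \<union> G2 \<union> G3)"
      unfolding S_def by blast
    then show False using m1[of _ G1] m2[of _ G2] m3[of _ G3] G1 G2 G3 by blast
  qed
  have wPi: "w \<in> PiE (pv_index V A) (\<lambda>i. edges (fst i))" using wE unfolding I_def E_def .
  show "(u = x \<and> v = y \<and> alpha (free_pro V A) u \<in> verts (free_pro V A)) \<or>
       (\<exists>t\<in>edges (free_pro V A).
           (alpha (free_pro V A) u = omega (free_pro V A) t \<and> sgd.mult (free_pro V A) u t = x \<and>
            alpha (free_pro V A) t = omega (free_pro V A) y \<and> v = sgd.mult (free_pro V A) t y) \<or>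
           (alpha (free_pro V A) x = omega (free_pro V A) t \<and> sgd.mult (free_pro V A) x t = u \<and>
            alpha (free_pro V A) t = omega (free_pro V A) v \<and> y = sgd.mult (free_pro V A) t v))"
  proof -
    { assume a: "\<forall>G. finite G \<and> G \<subseteq> I \<longrightarrow> A1 G w"
      have sol: "\<forall>i\<in>pv_index V A. solP (fst i) (u i) (v i) (x i) (y i) (w i)"
      proof
        fix i assume "i \<in> pv_index V A"
        then have "A1 {i} w" using a unfolding I_def by simp
        then show "solP (fst i) (u i) (v i) (x i) (y i) (w i)" unfolding A1_def by simp
      qed
      have cc: "\<forall>i\<in>pv_index V A. \<forall>j\<in>pv_index V A. \<forall>h k. compatible A i j h k \<longrightarrow> k (w i) = w j"
      proof (intro ballI allI impI)
        fix i j h k assume "i \<in> pv_index V A" "j \<in> pv_index V A" "compatible A i j h k"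
        moreover have "A1 {i,j} w" using a \<open>i \<in> pv_index V A\<close> \<open>j \<in> pv_index V A\<close> unfolding I_def by simp
        ultimately show "k (w i) = w j" unfolding A1_def CC_def by blast
      qed
      have ?thesis using sol_lift[OF wPi sol cc e] by blast }
    moreover
    { assume a: "\<forall>G. finite G \<and> G \<subseteq> I \<longrightarrow> A2 G w"
      have sol: "\<forall>i\<in>pv_index V A. solP (fst i) (x i) (y i) (u i) (v i) (w i)"
      proof
        fix i assume "i \<in> pv_index V A"
        then have "A2 {i} w" using a unfolding I_def by simp
        then show "solP (fst i) (x i) (y i) (u i) (v i) (w i)" unfolding A2_def by simp
      qed
      have cc: "\<forall>i\<in>pv_index V A. \<forall>j\<in>pv_index V A. \<forall>h k. compatible A i j h k \<longrightarrow> k (w i) = w j"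
      proof (intro ballI allI impI)
        fix i j h k assume "i \<in> pv_index V A" "j \<in> pv_index V A" "compatible A i j h k"
        moreover have "A2 {i,j} w" using a \<open>i \<in> pv_index V A\<close> \<open>j \<in> pv_index V A\<close> unfolding I_def by simp
        ultimately show "k (w i) = w j" unfolding A2_def CC_def by blast
      qed
      have ?thesis using sol_lift[OF wPi sol cc e(3) e(4) e(1) e(2)] by blast }
    moreover
    { assume a: "\<forall>G. finite G \<and> G \<subseteq> I \<longrightarrow> A3 G"
      have "u i = x i \<and> v i = y i" for i
      proof (cases "i \<in> I")
        case True
        then have "A3 {i}" using a by simp
        then show ?thesis unfolding A3_def by simp
      next
        case False
        have und: "z i = undefined" if "z \<in> lim_edges V A" for z
          using that False unfolding lim_edges_def I_def by blast
        show ?thesis using und[OF e(1)] und[OF e(2)] und[OF e(3)] und[OF e(4)] by simp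
      qed
      then have "u = x" "v = y" by (simp_all add: fun_eq_iff)
      moreover have "alpha (free_pro V A) u \<in> verts (free_pro V A)"
        using lim_alpha[OF PV e(1)] by (simp add: free_pro_def)
      ultimately have ?thesis by blast }
    ultimately show ?thesis using all by blast
  qed
qed






lemma hom_comp:
  assumes "sgd_hom S T h k" "sgd_hom T U h' k'"
  shows "sgd_hom S U (h' \<circ> h) (k' \<circ> k)"
  using assms unfolding sgd_hom_def graph_hom_def by auto

lemma compat_comp:
  assumes "compatible A (T1,f1,g1) (T2,f2,g2) h k" "compatible A (T2,f2,g2) (T3,f3,g3) h' k'"
  shows "compatible A (T1,f1,g1) (T3,f3,g3) (h' \<circ> h) (k' \<circ> k)"
proof -
  have "sgd_hom T1 T2 h k" "sgd_hom T2 T3 h' k'" using assms unfolding compatible_def by simp_all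
  then have "sgd_hom T1 T3 (h' \<circ> h) (k' \<circ> k)" by (rule hom_comp)
  then show ?thesis using assms unfolding compatible_def by simp
qed

lemma prod_proj:
  assumes "sgd_hom P (sgd_prod S T) \<phi> \<psi>"
  shows "sgd_hom P S (fst \<circ> \<phi>) (fst \<circ> \<psi>)" "sgd_hom P T (snd \<circ> \<phi>) (snd \<circ> \<psi>)"
proof -
  have g: "\<forall>v\<in>verts P. \<phi> v \<in> verts S \<times> verts T"
    "\<forall>e\<in>edges P. \<psi> e \<in> edges S \<times> edges T \<and> alpha (sgd_prod S T) (\<psi> e) = \<phi> (alpha P e)
        \<and> omega (sgd_prod S T) (\<psi> e) = \<phi> (omega P e)"
    "\<forall>s\<in>edges P. \<forall>t\<in>edges P. alpha P s = omega P t \<longrightarrow> \<psi> (sgd.mult P s t) = sgd.mult (sgd_prod S T) (\<psi> s) (\<psi> t)"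
    using assms unfolding sgd_hom_def graph_hom_def by (simp_all add: sgd_prod_def)
  have a: "alpha (sgd_prod S T) z = (alpha S (fst z), alpha T (snd z))"
    "omega (sgd_prod S T) z = (omega S (fst z), omega T (snd z))"
    "sgd.mult (sgd_prod S T) z z' = (sgd.mult S (fst z) (fst z'), sgd.mult T (snd z) (snd z'))" for z z'
    by (simp_all add: sgd_prod_def split: prod.splits)
  show "sgd_hom P S (fst \<circ> \<phi>) (fst \<circ> \<psi>)" unfolding sgd_hom_def graph_hom_def
  proof (intro conjI ballI impI)
    show "(fst \<circ> \<phi>) v \<in> verts S" if "v \<in> verts P" for v using g(1) that by auto
    show "(fst \<circ> \<psi>) e \<in> edges S" if "e \<in> edges P" for e using g(2) that by auto
    show "alpha S ((fst \<circ> \<psi>) e) = (fst \<circ> \<phi>) (alpha P e)" if "e \<in> edges P" for e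
      using g(2) that a(1)[of "\<psi> e"] by auto
    show "omega S ((fst \<circ> \<psi>) e) = (fst \<circ> \<phi>) (omega P e)" if "e \<in> edges P" for e
      using g(2) that a(2)[of "\<psi> e"] by auto
    show "(fst \<circ> \<psi>) (sgd.mult P s t) = sgd.mult S ((fst \<circ> \<psi>) s) ((fst \<circ> \<psi>) t)"
      if "s \<in> edges P" "t \<in> edges P" "alpha P s = omega P t" for s t
      using g(3) that a(3) by auto
  qed
  show "sgd_hom P T (snd \<circ> \<phi>) (snd \<circ> \<psi>)" unfolding sgd_hom_def graph_hom_def
  proof (intro conjI ballI impI)
    show "(snd \<circ> \<phi>) v \<in> verts T" if "v \<in> verts P" for v using g(1) that by auto
    show "(snd \<circ> \<psi>) e \<in> edges T" if "e \<in> edges P" for e using g(2) that by auto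
    show "alpha T ((snd \<circ> \<psi>) e) = (snd \<circ> \<phi>) (alpha P e)" if "e \<in> edges P" for e
      using g(2) that a(1)[of "\<psi> e"] by auto
    show "omega T ((snd \<circ> \<psi>) e) = (snd \<circ> \<phi>) (omega P e)" if "e \<in> edges P" for e
      using g(2) that a(2)[of "\<psi> e"] by auto
    show "(snd \<circ> \<psi>) (sgd.mult P s t) = sgd.mult T ((snd \<circ> \<psi>) s) ((snd \<circ> \<psi>) t)"
      if "s \<in> edges P" "t \<in> edges P" "alpha P s = omega P t" for s t
      using g(3) that a(3) by auto
  qed
qed

lemma bij_single:
  assumes "bij_betw f X {b}" shows "\<exists>a. X = {a}"
proof -
  have i: "inj_on f X" and im: "f ` X = {b}" using assms unfolding bij_betw_def by auto
  have "X \<noteq> {}" using im by auto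
  then obtain a where a: "a \<in> X" by blast
  have "x = a" if "x \<in> X" for x
  proof -
    have "f x = b" "f a = b" using im that a by auto
    then show ?thesis using i that a unfolding inj_on_def by metis
  qed
  then have "X = {a}" using a by blast
  then show ?thesis by blast
qed

lemma common_index:
  assumes PV: "pseudovariety V" and gA: "is_graph A" and fin: "finite G" and sub: "G \<subseteq> pv_index V A"
  shows "\<exists>j\<in>pv_index V A. \<forall>i\<in>G. \<exists>h k. compatible A j i h k"
  using fin sub
proof (induction G rule: finite_induct)
  case empty
  obtain P where P: "P \<in> V" "sgd_iso P sgd_trivial" using PV unfolding pseudovariety_def by blast
  then obtain \<phi> \<psi> where "bij_betw \<phi> (verts P) {()}" "bij_betw \<psi> (edges P) {()}"
    unfolding sgd_iso_def sgd_trivial_def by auto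
  then obtain p e where pe: "verts P = {p}" "edges P = {e}" using bij_single by metis
  have "is_sgd P" using pv_sgd[OF PV P(1)] by blast
  then have "alpha P e = p" "omega P e = p" using pe unfolding is_sgd_def is_graph_def by auto
  then have "(P, \<lambda>_. p, \<lambda>_. e) \<in> pv_index V A"
    using P(1) pe unfolding pv_index_def graph_hom_def by auto
  then show ?case by blast
next
  case (insert i G)
  then obtain P0 f0 g0 where j0: "(P0,f0,g0) \<in> pv_index V A"
    and c0: "\<forall>i'\<in>G. \<exists>h k. compatible A (P0,f0,g0) i' h k" by auto
  obtain T f g where ii: "i = (T,f,g)" by (cases i) auto
  have iA: "(T,f,g) \<in> pv_index V A" using insert.prems ii by auto
  have P0V: "P0 \<in> V" and h0: "graph_hom A P0 f0 g0" using j0 unfolding pv_index_def by auto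
  have TV: "T \<in> V" and hT: "graph_hom A T f g" using iA unfolding pv_index_def by auto
  obtain P where PV': "P \<in> V" and iso: "sgd_iso P (sgd_prod P0 T)" using PV P0V TV unfolding pseudovariety_def by blast
  then obtain \<phi> \<psi> where hom: "sgd_hom P (sgd_prod P0 T) \<phi> \<psi>" and b1: "bij_betw \<phi> (verts P) (verts P0 \<times> verts T)"
    and b2: "bij_betw \<psi> (edges P) (edges P0 \<times> edges T)"
    unfolding sgd_iso_def by (auto simp: sgd_prod_def)
  have sP: "is_sgd P" using pv_sgd[OF PV PV'] by blast
  define F where "F a = inv_into (verts P) \<phi> (f0 a, f a)" for a
  define H where "H e = inv_into (edges P) \<psi> (g0 e, g e)" for e
  have Fv: "F a \<in> verts P" "\<phi> (F a) = (f0 a, f a)" if "a \<in> verts A" for a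
  proof -
    have "(f0 a, f a) \<in> verts P0 \<times> verts T" using h0 hT that unfolding graph_hom_def by auto
    then show "F a \<in> verts P" "\<phi> (F a) = (f0 a, f a)" unfolding F_def
      using b1 f_inv_into_f[of _ \<phi> "verts P"] inv_into_into[of _ \<phi> "verts P"] unfolding bij_betw_def by auto
  qed
  have He: "H e \<in> edges P" "\<psi> (H e) = (g0 e, g e)" if "e \<in> edges A" for e
  proof -
    have "(g0 e, g e) \<in> edges P0 \<times> edges T" using h0 hT that unfolding graph_hom_def by auto
    then show "H e \<in> edges P" "\<psi> (H e) = (g0 e, g e)" unfolding H_def
      using b2 f_inv_into_f[of _ \<psi> "edges P"] inv_into_into[of _ \<psi> "edges P"] unfolding bij_betw_def by auto
  qed
  have gh: "graph_hom A P F H" unfolding graph_hom_def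
  proof (intro conjI ballI)
    show "F v \<in> verts P" if "v \<in> verts A" for v using Fv that by blast
    fix e assume e: "e \<in> edges A"
    show "H e \<in> edges P" using He e by blast
    have ae: "alpha A e \<in> verts A" "omega A e \<in> verts A" using gA e unfolding is_graph_def by auto
    have "\<phi> (alpha P (H e)) = alpha (sgd_prod P0 T) (\<psi> (H e))"
      using hom He(1)[OF e] unfolding sgd_hom_def graph_hom_def by auto
    also have "\<dots> = (f0 (alpha A e), f (alpha A e))"
      using He(2)[OF e] h0 hT e unfolding graph_hom_def by (auto simp: sgd_prod_def)
    also have "\<dots> = \<phi> (F (alpha A e))" using Fv(2)[OF ae(1)] by simp
    finally have "\<phi> (alpha P (H e)) = \<phi> (F (alpha A e))" .
    moreover have "alpha P (H e) \<in> verts P" using sP He(1)[OF e] unfolding is_sgd_def is_graph_def by blast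
    ultimately show "alpha P (H e) = F (alpha A e)" using Fv(1)[OF ae(1)] b1 unfolding bij_betw_def inj_on_def by blast
    have "\<phi> (omega P (H e)) = omega (sgd_prod P0 T) (\<psi> (H e))"
      using hom He(1)[OF e] unfolding sgd_hom_def graph_hom_def by auto
    also have "\<dots> = (f0 (omega A e), f (omega A e))"
      using He(2)[OF e] h0 hT e unfolding graph_hom_def by (auto simp: sgd_prod_def)
    also have "\<dots> = \<phi> (F (omega A e))" using Fv(2)[OF ae(2)] by simp
    finally have "\<phi> (omega P (H e)) = \<phi> (F (omega A e))" .
    moreover have "omega P (H e) \<in> verts P" using sP He(1)[OF e] unfolding is_sgd_def is_graph_def by blast
    ultimately show "omega P (H e) = F (omega A e)" using Fv(1)[OF ae(2)] b1 unfolding bij_betw_def inj_on_def by blast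
  qed
  then have jA: "(P, F, H) \<in> pv_index V A" using PV' unfolding pv_index_def by auto
  have cfst: "compatible A (P,F,H) (P0,f0,g0) (fst \<circ> \<phi>) (fst \<circ> \<psi>)"
    using prod_proj(1)[OF hom] Fv He unfolding compatible_def by auto
  have csnd: "compatible A (P,F,H) (T,f,g) (snd \<circ> \<phi>) (snd \<circ> \<psi>)"
    using prod_proj(2)[OF hom] Fv He unfolding compatible_def by auto
  have "\<forall>i'\<in>insert i G. \<exists>h k. compatible A (P,F,H) i' h k"
  proof
    fix i' assume "i' \<in> insert i G"
    then show "\<exists>h k. compatible A (P,F,H) i' h k"
    proof
      assume "i' = i" then show ?thesis using csnd ii by blast
    next
      assume "i' \<in> G"
      then obtain h k where c: "compatible A (P0,f0,g0) i' h k" using c0 by blast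
      obtain T3 f3 g3 where i3: "i' = (T3,f3,g3)" by (cases i') auto
      show ?thesis using compat_comp[OF cfst c[unfolded i3]] i3 by blast
    qed
  qed
  then show ?case using jA by blast
qed

lemma dir1:
  fixes A :: "('a,'b) graph" and V :: "(nat,nat) sgd set"
  assumes PV: "pseudovariety V" and eq: "equidivisible_pv V" and gA: "is_graph A"
  shows "equidivisible (free_pro V A)"
proof (rule core[OF PV, where 'c=nat and 'd=nat])
  fix G assume G: "finite G" "G \<subseteq> pv_index V A"
  obtain j where j: "j \<in> pv_index V A" and cj: "\<forall>i\<in>G. \<exists>h k. compatible A j i h k"
    using common_index[OF PV gA G] by blast
  obtain P fP gP where jj: "j = (P,fP,gP)" by (cases j) auto
  have PV': "P \<in> V" and hP: "graph_hom A P fP gP" using j jj unfolding pv_index_def by auto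
  have fin: "finite (verts P)" "finite (edges P)" using pv_sgd[OF PV PV'] by auto
  define B :: "(nat,nat) graph" where "B = \<lparr>verts = fP ` verts A, edges = gP ` edges A, alpha = alpha P, omega = omega P\<rparr>"
  have gB: "is_graph B" unfolding is_graph_def
  proof
    fix e' assume "e' \<in> edges B"
    then obtain e where e: "e \<in> edges A" "e' = gP e" unfolding B_def by auto
    have "alpha A e \<in> verts A" "omega A e \<in> verts A" using gA e(1) unfolding is_graph_def by auto
    moreover have "alpha P (gP e) = fP (alpha A e)" "omega P (gP e) = fP (omega A e)"
      using hP e(1) unfolding graph_hom_def by auto
    ultimately show "alpha B e' \<in> verts B \<and> omega B e' \<in> verts B" unfolding B_def e(2) by auto
  qed
  have sub: "fP ` verts A \<subseteq> verts P" "gP ` edges A \<subseteq> edges P" using hP unfolding graph_hom_def by auto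
  have finB: "finite (verts B)" "finite (edges B)" unfolding B_def using sub fin finite_subset by auto
  have eqB: "equidivisible (free_pro V B)" using eq gB finB unfolding equidivisible_pv_def by blast
  have hom: "graph_hom A B fP gP" using hP unfolding graph_hom_def B_def by auto
  have fac: "\<forall>i\<in>G. \<exists>f' g'. (fst i, f', g') \<in> pv_index V B \<and> (\<forall>a\<in>verts A. f' (fP a) = fst (snd i) a)
           \<and> (\<forall>e\<in>edges A. g' (gP e) = snd (snd i) e)"
  proof
    fix i assume iG: "i \<in> G"
    obtain T f g where ii: "i = (T,f,g)" by (cases i) auto
    obtain h k where c: "compatible A (P,fP,gP) (T,f,g) h k" using cj iG ii jj by blast
    have sh: "sgd_hom P T h k" and hf: "\<forall>a\<in>verts A. h (fP a) = f a" and kg: "\<forall>e\<in>edges A. k (gP e) = g e"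
      using c unfolding compatible_def by auto
    have TV: "T \<in> V" and hT: "graph_hom A T f g" using G(2) iG ii unfolding pv_index_def by auto
    have "graph_hom B T h k" unfolding graph_hom_def
    proof (intro conjI ballI)
      fix v assume "v \<in> verts B"
      then obtain a where a: "a \<in> verts A" "v = fP a" unfolding B_def by auto
      show "h v \<in> verts T" using a hf hT unfolding graph_hom_def by auto
    next
      fix e' assume "e' \<in> edges B"
      then obtain e where e: "e \<in> edges A" "e' = gP e" unfolding B_def by auto
      have gpe: "gP e \<in> edges P" using hP e(1) unfolding graph_hom_def by auto
      show "k e' \<in> edges T" using e kg hT unfolding graph_hom_def by auto
      show "alpha T (k e') = h (alpha B e')"
        using sh gpe e(2) unfolding sgd_hom_def graph_hom_def B_def by auto
      show "omega T (k e') = h (omega B e')"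
        using sh gpe e(2) unfolding sgd_hom_def graph_hom_def B_def by auto
    qed
    then have "(T, h, k) \<in> pv_index V B" using TV unfolding pv_index_def by auto
    then show "\<exists>f' g'. (fst i, f', g') \<in> pv_index V B \<and> (\<forall>a\<in>verts A. f' (fP a) = fst (snd i) a)
           \<and> (\<forall>e\<in>edges A. g' (gP e) = snd (snd i) e)" using hf kg ii by auto
  qed
  have s1: "fP ` verts A = verts B" and s2: "gP ` edges A = edges B" unfolding B_def by auto
  show "\<exists>(B :: (nat,nat) graph) p1 p2. equidivisible (free_pro V B) \<and> graph_hom A B p1 p2 \<and> p1 ` verts A = verts B \<and> p2 ` edges A = edges B
     \<and> (\<forall>i\<in>G. \<exists>f' g'. (fst i, f', g') \<in> pv_index V B \<and> (\<forall>a\<in>verts A. f' (p1 a) = fst (snd i) a)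
           \<and> (\<forall>e\<in>edges A. g' (p2 e) = snd (snd i) e))"
    using eqB hom s1 s2 fac by blast
qed

lemma dir2:
  fixes A :: "(nat,nat) graph" and V :: "(nat,nat) sgd set"
  assumes PV: "pseudovariety V" and iv: "infinite (UNIV :: 'v set)" and ie: "infinite (UNIV :: 'e set)"
    and H: "\<forall>B :: ('v, 'e) graph. is_graph B \<and> finite (verts B) \<longrightarrow> equidivisible (free_pro V B)"
    and gA: "is_graph A" and finA: "finite (verts A)"
  shows "equidivisible (free_pro V A)"
proof -
  obtain p1 :: "nat \<Rightarrow> 'v" where p1: "inj p1" using iv infinite_countable_subset by blast
  obtain p2 :: "nat \<Rightarrow> 'e" where p2: "inj p2" using ie infinite_countable_subset by blast
  define B :: "('v,'e) graph" where "B = \<lparr>verts = p1 ` verts A, edges = p2 ` edges A,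
      alpha = p1 \<circ> alpha A \<circ> inv p2, omega = p1 \<circ> omega A \<circ> inv p2\<rparr>"
  have ab: "alpha B (p2 e) = p1 (alpha A e)" "omega B (p2 e) = p1 (omega A e)" for e
    unfolding B_def using p2 by auto
  have gB: "is_graph B" using gA ab unfolding is_graph_def B_def by auto
  have finB: "finite (verts B)" using finA unfolding B_def by auto
  have eqB: "equidivisible (free_pro V B)" using H gB finB by blast
  have hom: "graph_hom A B p1 p2" using ab unfolding graph_hom_def B_def by auto
  show ?thesis
  proof (rule core[OF PV, where 'c='v and 'd='e])
    fix G assume G: "finite G" "G \<subseteq> pv_index V A"
    have fac: "\<forall>i\<in>G. \<exists>f' g'. (fst i, f', g') \<in> pv_index V B \<and> (\<forall>a\<in>verts A. f' (p1 a) = fst (snd i) a)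
           \<and> (\<forall>e\<in>edges A. g' (p2 e) = snd (snd i) e)"
    proof
      fix i assume iG: "i \<in> G"
      obtain T f g where ii: "i = (T,f,g)" by (cases i) auto
      have TV: "T \<in> V" and hT: "graph_hom A T f g" using G(2) iG ii unfolding pv_index_def by auto
      have "graph_hom B T (f \<circ> inv p1) (g \<circ> inv p2)" unfolding graph_hom_def
      proof (intro conjI ballI)
        fix v assume "v \<in> verts B"
        then obtain a where a: "a \<in> verts A" "v = p1 a" unfolding B_def by auto
        show "(f \<circ> inv p1) v \<in> verts T" using a hT p1 unfolding graph_hom_def by auto
      next
        fix e' assume "e' \<in> edges B"
        then obtain e where e: "e \<in> edges A" "e' = p2 e" unfolding B_def by auto
        show "(g \<circ> inv p2) e' \<in> edges T" using e hT p2 unfolding graph_hom_def by auto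
        show "alpha T ((g \<circ> inv p2) e') = (f \<circ> inv p1) (alpha B e')"
          using e hT p1 p2 ab unfolding graph_hom_def by auto
        show "omega T ((g \<circ> inv p2) e') = (f \<circ> inv p1) (omega B e')"
          using e hT p1 p2 ab unfolding graph_hom_def by auto
      qed
      then have "(T, f \<circ> inv p1, g \<circ> inv p2) \<in> pv_index V B" using TV unfolding pv_index_def by auto
      then show "\<exists>f' g'. (fst i, f', g') \<in> pv_index V B \<and> (\<forall>a\<in>verts A. f' (p1 a) = fst (snd i) a)
           \<and> (\<forall>e\<in>edges A. g' (p2 e) = snd (snd i) e)"
        using ii p1 p2 by (intro exI[of _ "f \<circ> inv p1"] exI[of _ "g \<circ> inv p2"]) simp
    qed
    have s1: "p1 ` verts A = verts B" and s2: "p2 ` edges A = edges B" unfolding B_def by auto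
    show "\<exists>(B :: ('v,'e) graph) p1 p2. equidivisible (free_pro V B) \<and> graph_hom A B p1 p2 \<and> p1 ` verts A = verts B \<and> p2 ` edges A = edges B
       \<and> (\<forall>i\<in>G. \<exists>f' g'. (fst i, f', g') \<in> pv_index V B \<and> (\<forall>a\<in>verts A. f' (p1 a) = fst (snd i) a)
             \<and> (\<forall>e\<in>edges A. g' (p2 e) = snd (snd i) e))"
      using eqB hom s1 s2 fac by blast
  qed
qed

theorem mainTheorem9:
  fixes V :: "(nat, nat) sgd set"
  assumes "pseudovariety V"
    and "infinite (UNIV :: 'v set)"
    and "infinite (UNIV :: 'e set)"
  shows "equidivisible_pv V \<longleftrightarrow>
    (\<forall>A :: ('v, 'e) graph. is_graph A \<and> finite (verts A)
        \<longrightarrow> equidivisible (free_pro V A))"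
proof
  assume "equidivisible_pv V"
  then show "\<forall>A :: ('v, 'e) graph. is_graph A \<and> finite (verts A) \<longrightarrow> equidivisible (free_pro V A)"
    using dir1[OF assms(1)] by blast
next
  assume H: "\<forall>A :: ('v, 'e) graph. is_graph A \<and> finite (verts A) \<longrightarrow> equidivisible (free_pro V A)"
  show "equidivisible_pv V" unfolding equidivisible_pv_def
    using dir2[OF assms H] by blast
qed

end
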